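(* For all constants $0<\alpha\le \beta$ there is a constant $c>0$ such that the following holds. Let $k\le n$ be positive integers and let $h$ be an integer with $\alpha\log(n/k+1)\le h\le \beta\log(n/k+1)$ and $2\le h\le k$, and set $\ell=\lfloor k/h\rfloor$. Suppose that in the $\ell$-variant cup game on $n$ cups, some play of $T$ rounds ends with a cup of fill at least $4k$. Then $T\ge c\,h\,\ell^3$ (and hence $T=\Omega(k^3/h^2)$).
   Context: The $\ell$-variant cup game on $n$ cups ($\ell$ a positive integer): there are $n$ cups with integer fills, all initially $0$. In each round the player chooses an integer $k'\ge 0$ and an integer $q\ge1$ such that at least $2q$ cups have fill exactly $k'$ (if none exist the game ends). Among these cups, exactly $q$ are raised to fill $k'+1$; if $k'$ is a multiple of $\ell$ (a checkpoint $a\ell$, $a\ge0$), the other $q$ are left at $k'$, and otherwise $q$ other such cups are lowered to $k'-1$. (Thus a cup that has reached a checkpoint never goes below it.) *)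

theory Defs
  imports Complex_Main
begin

definition cup_step :: "nat \<Rightarrow> nat \<Rightarrow> (nat \<Rightarrow> int) \<Rightarrow> (nat \<Rightarrow> int) \<Rightarrow> bool" where
  "cup_step l n f g \<longleftrightarrow>
     (\<exists>(k'::int) (q::nat) U D.
        k' \<ge> 0 \<and> q \<ge> 1 \<and> U \<subseteq> {..<n} \<and> D \<subseteq> {..<n} \<and> U \<inter> D = {} \<and>
        card U = q \<and> card D = q \<and> (\<forall>i \<in> U \<union> D. f i = k') \<and>
        g = (\<lambda>i. if i \<in> U then f i + 1
                 else if i \<in> D \<and> \<not> (int l dvd k') then f i - 1
                 else f i))"

definition cup_play :: "nat \<Rightarrow> nat \<Rightarrow> nat \<Rightarrow> (nat \<Rightarrow> nat \<Rightarrow> int) \<Rightarrow> bool" where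
  "cup_play l n T s \<longleftrightarrow> s 0 = (\<lambda>_. 0) \<and> (\<forall>t < T. cup_step l n (s t) (s (Suc t)))"

end

theory Submission imports Defs begin
lemma step_elim:
  assumes "cup_step l n f g"
  obtains k' q U D where "k' \<ge> 0" "q \<ge> 1" "U \<subseteq> {..<n}" "D \<subseteq> {..<n}" "U \<inter> D = {}"
    "card U = q" "card D = q" "\<forall>i\<in>U\<union>D. f i = k'" "\<forall>i\<in>U. g i = k' + 1"
    "\<forall>i\<in>D. g i = (if int l dvd k' then k' else k' - 1)" "\<forall>i. i \<notin> U \<union> D \<longrightarrow> g i = f i"
proof -
  obtain k' q U D where h: "k' \<ge> 0" "q \<ge> 1" "U \<subseteq> {..<n}" "D \<subseteq> {..<n}" "U \<inter> D = {}"
    "card U = q" "card D = q" "\<forall>i \<in> U \<union> D. f i = k'"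
    "g = (\<lambda>i. if i \<in> U then f i + 1 else if i \<in> D \<and> \<not> (int l dvd k') then f i - 1 else f i)"
    using assms unfolding cup_step_def apply (elim exE conjE) by assumption
  show ?thesis
  proof (rule that[OF h(1-8)])
    show "\<forall>i\<in>U. g i = k' + 1" using h(8) unfolding h(9) by simp
    show "\<forall>i\<in>D. g i = (if int l dvd k' then k' else k' - 1)" using h(5,8) unfolding h(9) by auto
    show "\<forall>i. i \<notin> U \<union> D \<longrightarrow> g i = f i" unfolding h(9) by simp
  qed
qed

lemma step_sum:
  fixes \<phi> :: "int \<Rightarrow> real" and f g :: "nat \<Rightarrow> int" and n :: nat
  assumes "U \<subseteq> {..<n}" "D \<subseteq> {..<n}" "U \<inter> D = {}" "\<forall>i\<in>U\<union>D. f i = k'"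
    "\<forall>i\<in>U. g i = k'+1" "\<forall>i\<in>D. g i = d" "\<forall>i. i \<notin> U \<union> D \<longrightarrow> g i = f i"
  shows "(\<Sum>i<n. \<phi> (g i)) = (\<Sum>i<n. \<phi> (f i)) + real (card U) * (\<phi> (k'+1) - \<phi> k')
           + real (card D) * (\<phi> d - \<phi> k')"
proof -
  have fU1: "finite U" using finite_subset[OF assms(1)] by simp
  have fU2: "finite D" using finite_subset[OF assms(2)] by simp
  have "(\<Sum>i<n. \<phi> (g i)) - (\<Sum>i<n. \<phi> (f i)) = (\<Sum>i<n. \<phi> (g i) - \<phi> (f i))"
    by (simp add: sum_subtractf)
  also have "\<dots> = (\<Sum>i\<in>U\<union>D. \<phi> (g i) - \<phi> (f i))"
    by (rule sum.mono_neutral_right) (use assms in auto)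
  also have "\<dots> = (\<Sum>i\<in>U. \<phi> (g i) - \<phi> (f i)) + (\<Sum>i\<in>D. \<phi> (g i) - \<phi> (f i))"
    by (rule sum.union_disjoint) (use fU1 fU2 assms in auto)
  also have "(\<Sum>i\<in>U. \<phi> (g i) - \<phi> (f i)) = (\<Sum>i\<in>U. \<phi> (k'+1) - \<phi> k')"
    by (rule sum.cong) (use assms in auto)
  also have "(\<Sum>i\<in>D. \<phi> (g i) - \<phi> (f i)) = (\<Sum>i\<in>D. \<phi> d - \<phi> k')"
    by (rule sum.cong) (use assms in auto)
  finally show ?thesis by simp
qed

lemma step_changed:
  fixes f g :: "nat \<Rightarrow> int"
  assumes "cup_step l n f g"
  shows "\<exists>k'. \<forall>i. g i \<noteq> f i \<longrightarrow> f i = k'"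
proof -
  obtain k' q U D where h0: "k' \<ge> 0" "q \<ge> 1" "U \<subseteq> {..<n}" "D \<subseteq> {..<n}" "U \<inter> D = {}"
    "card U = q" "card D = q" and h: "\<forall>i\<in>U\<union>D. f i = k'" "\<forall>i\<in>U. g i = k' + 1"
    "\<forall>i\<in>D. g i = (if int l dvd k' then k' else k' - 1)" "\<forall>i. i \<notin> U \<union> D \<longrightarrow> g i = f i"
    by (rule step_elim[OF assms(1)])
  show ?thesis using h(1,4) by blast
qed

lemma step_mono:
  fixes f g :: "nat \<Rightarrow> int"
  assumes "cup_step l n f g" "int l dvd b" "f i \<ge> b"
  shows "g i \<ge> b"
proof -
  obtain k' q U D where h0: "k' \<ge> 0" "q \<ge> 1" "U \<subseteq> {..<n}" "D \<subseteq> {..<n}" "U \<inter> D = {}"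
    "card U = q" "card D = q" and h: "\<forall>i\<in>U\<union>D. f i = k'" "\<forall>i\<in>U. g i = k' + 1"
    "\<forall>i\<in>D. g i = (if int l dvd k' then k' else k' - 1)" "\<forall>i. i \<notin> U \<union> D \<longrightarrow> g i = f i"
    by (rule step_elim[OF assms(1)])
  show ?thesis
  proof (cases "i \<in> U")
    case True then show ?thesis using h(1,2) assms(3) by auto
  next
    case nU: False
    show ?thesis
    proof (cases "i \<in> D")
      case True
      have fk: "f i = k'" using h(1) True by auto
      show ?thesis
      proof (cases "int l dvd k'")
        case True then show ?thesis using h(3) \<open>i \<in> D\<close> fk assms(3) by auto
      next
        case False
        then have "k' \<noteq> b" using assms(2) by auto
        then show ?thesis using h(3) \<open>i \<in> D\<close> fk assms(3) False by auto
      qed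
    next
      case False then show ?thesis using h(4) nU assms(3) by auto
    qed
  qed
qed

lemma step_le:
  fixes f g :: "nat \<Rightarrow> int"
  assumes "cup_step l n f g"
  shows "g i \<le> f i + 1"
proof -
  obtain k' q U D where h0: "k' \<ge> 0" "q \<ge> 1" "U \<subseteq> {..<n}" "D \<subseteq> {..<n}" "U \<inter> D = {}"
    "card U = q" "card D = q" and h: "\<forall>i\<in>U\<union>D. f i = k'" "\<forall>i\<in>U. g i = k' + 1"
    "\<forall>i\<in>D. g i = (if int l dvd k' then k' else k' - 1)" "\<forall>i. i \<notin> U \<union> D \<longrightarrow> g i = f i"
    by (rule step_elim[OF assms(1)])
  show ?thesis using h by (cases "i \<in> U"; cases "i \<in> D") auto
qed

lemma play_step:
  assumes "cup_play l n T s" "t < T"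
  shows "cup_step l n (s t) (s (Suc t))"
  using assms unfolding cup_play_def by simp

lemma play_mono:
  assumes "cup_play l n T s" "t \<le> t'" "t' \<le> T" "int l dvd b" "s t i \<ge> b"
  shows "s t' i \<ge> b"
  using assms(2,3)
proof (induction t')
  case 0 then show ?case using assms(5) by simp
next
  case (Suc m)
  show ?case
  proof (cases "t = Suc m")
    case True then show ?thesis using assms(5) by simp
  next
    case False
    then have "s m i \<ge> b" using Suc by simp
    moreover have "cup_step l n (s m) (s (Suc m))" using play_step[OF assms(1)] Suc(3) by simp
    ultimately show ?thesis using step_mono assms(4) by blast
  qed
qed

lemma play_nonneg:
  assumes "cup_play l n T s" "t \<le> T"
  shows "s t i \<ge> 0"
proof -
  have "s 0 i \<ge> 0" using assms(1) unfolding cup_play_def by simp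
  then show ?thesis using play_mono[OF assms(1) _ assms(2), of 0 0 i] by simp
qed

lemma play_le:
  assumes "cup_play l n T s" "t \<le> T"
  shows "s t i \<le> int t"
  using assms(2)
proof (induction t)
  case 0 then show ?case using assms(1) unfolding cup_play_def by simp
next
  case (Suc m)
  have "cup_step l n (s m) (s (Suc m))" using play_step[OF assms(1)] Suc(2) by simp
  then have "s (Suc m) i \<le> s m i + 1" by (rule step_le)
  then show ?case using Suc by simp
qed

definition cnt :: "nat \<Rightarrow> (nat \<Rightarrow> int) \<Rightarrow> (int \<Rightarrow> bool) \<Rightarrow> real" where
  "cnt n f P = (\<Sum>i<n. if P (f i) then 1 else 0)"

lemma cnt_mono: "(\<And>v. P v \<Longrightarrow> Q v) \<Longrightarrow> cnt n f P \<le> cnt n f Q"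
  unfolding cnt_def by (rule sum_mono) auto

lemma cnt_nonneg: "0 \<le> cnt n f P"
  unfolding cnt_def by (rule sum_nonneg) auto

lemma cnt_split: "cnt n f P = cnt n f (\<lambda>v. P v \<and> Q v) + cnt n f (\<lambda>v. P v \<and> \<not> Q v)"
  unfolding cnt_def by (simp add: sum.distrib[symmetric]) (rule sum.cong, auto)

lemma cnt_ge_card:
  fixes f :: "nat \<Rightarrow> int"
  assumes "U \<subseteq> {..<n}" "\<forall>i\<in>U. P (f i)"
  shows "real (card U) \<le> cnt n f P"
proof -
  have "real (card U) = (\<Sum>i\<in>U. if P (f i) then 1 else (0::real))" using assms(2) by simp
  also have "\<dots> \<le> cnt n f P" unfolding cnt_def
    by (rule sum_mono2) (use assms(1) in auto)
  finally show ?thesis .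
qed

lemma cnt_step:
  fixes f g :: "nat \<Rightarrow> int"
  assumes "U \<subseteq> {..<n}" "D \<subseteq> {..<n}" "U \<inter> D = {}" "\<forall>i\<in>U\<union>D. f i = k'"
    "\<forall>i\<in>U. g i = k'+1" "\<forall>i\<in>D. g i = d" "\<forall>i. i \<notin> U \<union> D \<longrightarrow> g i = f i"
    "card U = q" "card D = q"
  shows "cnt n g P = cnt n f P + real q * ((if P (k'+1) then 1 else 0) - (if P k' then 1 else 0))
           + real q * ((if P d then 1 else 0) - (if P k' then 1 else 0))"
  unfolding cnt_def using step_sum[OF assms(1-7), of "\<lambda>v. if P v then 1 else 0"] assms(8,9) by simp

definition stair :: "nat \<Rightarrow> int \<Rightarrow> nat \<Rightarrow> (nat \<Rightarrow> int) \<Rightarrow> bool" where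
  "stair n b l f \<longleftrightarrow> (\<forall>x::nat. 1 \<le> x \<longrightarrow> x \<le> l \<longrightarrow> (\<exists>i<n. f i \<ge> b + int x) \<longrightarrow>
      real x \<le> cnt n f (\<lambda>v. b \<le> v \<and> v < b + int x))"

lemma stair_step:
  fixes f g :: "nat \<Rightarrow> int"
  assumes st: "cup_step l n f g" and ldb: "int l dvd b" and l1: "l \<ge> 1" and sf: "stair n b l f"
  shows "stair n b l g"
  unfolding stair_def
proof (intro allI impI)
  fix x :: nat assume x1: "1 \<le> x" and xl: "x \<le> l" and H': "\<exists>i<n. g i \<ge> b + int x"
  obtain k' q U D where h0: "k' \<ge> 0" "q \<ge> 1" "U \<subseteq> {..<n}" "D \<subseteq> {..<n}" "U \<inter> D = {}"
    "card U = q" "card D = q" and h: "\<forall>i\<in>U\<union>D. f i = k'" "\<forall>i\<in>U. g i = k' + 1"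
    "\<forall>i\<in>D. g i = (if int l dvd k' then k' else k' - 1)" "\<forall>i. i \<notin> U \<union> D \<longrightarrow> g i = f i"
    by (rule step_elim[OF st])
  define d where "d = (if int l dvd k' then k' else k' - 1)"
  have hD: "\<forall>i\<in>D. g i = d" using h(3) d_def by simp
  define P where "P = (\<lambda>v. b \<le> v \<and> v < b + int x)"
  have cs: "cnt n g P = cnt n f P + real q * ((if P (k'+1) then 1 else 0) - (if P k' then 1 else 0))
           + real q * ((if P d then 1 else 0) - (if P k' then 1 else 0))"
    by (rule cnt_step[OF h0(3,4,5) h(1,2) hD h(4) h0(6,7)])
  have Hf: "\<And>i. i < n \<Longrightarrow> f i \<ge> b + int x \<Longrightarrow> real x \<le> cnt n f P"
    using sf x1 xl unfolding stair_def P_def by blast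
  have "U \<noteq> {}" using h0(2,6) by auto
  then obtain u where u: "u \<in> U" by blast
  have un: "u < n" using u h0(3) by auto
  have fu: "f u = k'" using u h(1) by auto
  have dle: "d \<le> k'" unfolding d_def by simp
  have fUD: "finite U" "finite D" using finite_subset[OF h0(3)] finite_subset[OF h0(4)] by auto
  have cardUD: "card (U \<union> D) = 2 * q" using card_Un_disjoint[OF fUD h0(5)] h0(6,7) by simp
  show "real x \<le> cnt n g P"
  proof (cases "k' < b")
    case True
    have "\<exists>i<n. f i \<ge> b + int x"
    proof -
      from H' obtain i where i: "i < n" "g i \<ge> b + int x" by blast
      have "i \<notin> U" using i True h(2) x1 by force
      moreover have "i \<notin> D" using i True hD dle x1 by force
      ultimately show ?thesis using i h(4) by force
    qed
    then have "real x \<le> cnt n f P" using Hf by blast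
    moreover have "\<not> P k'" "\<not> P d" using True dle unfolding P_def by auto
    ultimately show ?thesis using cs h0(2) by (auto split: if_splits)
  next
    case nb: False
    show ?thesis
    proof (cases "k' \<ge> b + int l")
      case True
      have dge: "d \<ge> b + int l"
      proof (cases "int l dvd k'")
        case True then show ?thesis using \<open>k' \<ge> b + int l\<close> d_def by simp
      next
        case False
        have "int l dvd b + int l" using ldb by simp
        then have "k' \<noteq> b + int l" using False by auto
        then show ?thesis using \<open>k' \<ge> b + int l\<close> d_def False by simp
      qed
      have "\<exists>i<n. f i \<ge> b + int x"
      proof -
        from H' obtain i where i: "i < n" "g i \<ge> b + int x" by blast
        show ?thesis
        proof (cases "i \<in> U \<union> D")
          case True then have "f i = k'" using h(1) by auto
          then show ?thesis using i(1) True xl \<open>k' \<ge> b + int l\<close> by (intro exI[of _ i]) auto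
        next
          case False then show ?thesis using i h(4) by force
        qed
      qed
      then have "real x \<le> cnt n f P" using Hf by blast
      moreover have "\<not> P k'" "\<not> P d" "\<not> P (k'+1)" using True dge xl unfolding P_def by auto
      ultimately show ?thesis using cs by simp
    next
      case False
      define j where "j = k' - b"
      have j0: "0 \<le> j" and jl: "j < int l" using nb False j_def by auto
      have dvdj: "int l dvd k' \<longleftrightarrow> j = 0"
      proof
        assume "int l dvd k'"
        then have "int l dvd j" using ldb j_def by (simp add: dvd_diff)
        then show "j = 0" using j0 jl zdvd_imp_le by fastforce
      next
        assume "j = 0" then show "int l dvd k'" using ldb j_def by simp
      qed
      have dge: "d \<ge> b" using dvdj j0 j_def d_def by auto
      consider (c1) "int x \<le> j" | (c2) "int x = j + 1" | (c3) "int x \<ge> j + 2" by linarith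
      then show ?thesis
      proof cases
        case c1
        have "real x \<le> cnt n f P" using Hf[OF un] fu c1 j_def by simp
        moreover have "\<not> P k'" "\<not> P (k'+1)" using c1 j_def unfolding P_def by auto
        ultimately show ?thesis using cs h0(2) by (auto split: if_splits)
      next
        case c2
        have Pk: "P k'" "\<not> P (k'+1)" "P d" using c2 j_def dge dle unfolding P_def by auto
        have cg: "cnt n g P = cnt n f P - real q" using cs Pk by simp
        have split: "cnt n f P = cnt n f (\<lambda>v. P v \<and> v < k') + cnt n f (\<lambda>v. P v \<and> \<not> v < k')"
          by (rule cnt_split)
        have A: "real (card (U \<union> D)) \<le> cnt n f (\<lambda>v. P v \<and> \<not> v < k')"
          by (rule cnt_ge_card) (use h0(3,4) h(1) Pk(1) in auto)
        have B: "j \<le> cnt n f (\<lambda>v. P v \<and> v < k')"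
        proof (cases "j = 0")
          case True then show ?thesis using cnt_nonneg by simp
        next
          case False
          then have j1: "1 \<le> nat j" "nat j \<le> l" using j0 jl by auto
          have "f u \<ge> b + int (nat j)" using fu j_def j0 by simp
          then have "real (nat j) \<le> cnt n f (\<lambda>v. b \<le> v \<and> v < b + int (nat j))"
            using sf j1 un unfolding stair_def by blast
          also have "\<dots> \<le> cnt n f (\<lambda>v. P v \<and> v < k')"
            by (rule cnt_mono) (use j_def j0 c2 in \<open>auto simp: P_def\<close>)
          finally show ?thesis using j0 by simp
        qed
        show ?thesis using cg split A B cardUD c2 h0(2) by simp
      next
        case c3
        have Pk: "P k'" "P (k'+1)" "P d" using c3 j_def dge dle unfolding P_def by auto
        have "\<exists>i<n. f i \<ge> b + int x"
        proof -
          from H' obtain i where i: "i < n" "g i \<ge> b + int x" by blast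
          have "i \<notin> U" using i c3 h(2) j_def by force
          moreover have "i \<notin> D" using i c3 hD dle j_def by force
          ultimately show ?thesis using i h(4) by force
        qed
        then have "real x \<le> cnt n f P" using Hf by blast
        then show ?thesis using cs Pk by simp
      qed
    qed
  qed
qed

lemma stair_play:
  assumes "cup_play l n T s" "t \<le> T" "int l dvd b" "b \<ge> 0" "l \<ge> 1"
  shows "stair n b l (s t)"
  using assms(2)
proof (induction t)
  case 0
  have "s 0 = (\<lambda>_. 0)" using assms(1) unfolding cup_play_def by simp
  then show ?case unfolding stair_def using assms(4) by auto
next
  case (Suc m)
  show ?case by (rule stair_step[OF play_step[OF assms(1)] assms(3) assms(5) Suc.IH]) (use Suc.prems in auto)
qed

definition clampv :: "int \<Rightarrow> nat \<Rightarrow> int \<Rightarrow> int" where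
  "clampv b l v = max 0 (min (int l) (v - b))"

lemma clampv_low: "v \<le> b \<Longrightarrow> clampv b l v = 0"
  unfolding clampv_def by simp
lemma clampv_high: "v \<ge> b + int l \<Longrightarrow> clampv b l v = int l"
  unfolding clampv_def by simp
lemma clampv_mid: "b \<le> v \<Longrightarrow> v \<le> b + int l \<Longrightarrow> clampv b l v = v - b"
  unfolding clampv_def by simp

definition Gt :: "nat \<Rightarrow> int \<Rightarrow> (nat \<Rightarrow> int) \<Rightarrow> nat \<Rightarrow> real" where
  "Gt n b f x = cnt n f (\<lambda>v. v > b + int x)"
definition Pp :: "nat \<Rightarrow> int \<Rightarrow> nat \<Rightarrow> real \<Rightarrow> (nat \<Rightarrow> int) \<Rightarrow> real" where
  "Pp n b l N f = (\<Sum>x<l. Gt n b f x * (N - Gt n b f x))"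
definition Mm :: "nat \<Rightarrow> int \<Rightarrow> nat \<Rightarrow> (nat \<Rightarrow> int) \<Rightarrow> real" where
  "Mm n b l f = (\<Sum>i<n. real_of_int (clampv b l (f i)))"
definition Ss :: "nat \<Rightarrow> int \<Rightarrow> nat \<Rightarrow> (nat \<Rightarrow> int) \<Rightarrow> real" where
  "Ss n b l f = (\<Sum>i<n. real_of_int (clampv b l (f i) * (clampv b l (f i) - 1)))"
definition br :: "nat \<Rightarrow> int \<Rightarrow> nat \<Rightarrow> (nat \<Rightarrow> int) \<Rightarrow> (nat \<Rightarrow> int) \<Rightarrow> bool" where
  "br n b l f g \<longleftrightarrow> (\<exists>i<n. g i \<noteq> f i \<and> b \<le> f i \<and> f i < b + int l)"

lemma amgm_aux:
  fixes lam q :: real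
  assumes "lam > 0"
  shows "2 * q \<le> lam * (2 * q^2) + 1 / (2 * lam)"
proof -
  have "0 \<le> (2 * lam * q - 1)^2 / (2 * lam)" using assms by simp
  also have "(2 * lam * q - 1)^2 / (2 * lam) = lam * (2 * q^2) + 1 / (2 * lam) - 2 * q"
    using assms by (simp add: field_simps power2_eq_square)
  finally show ?thesis by simp
qed

lemma band_step:
  fixes f g :: "nat \<Rightarrow> int" and N lam :: real
  assumes st: "cup_step l n f g" and l2: "l \<ge> 2" and ldb: "int l dvd b" and lam: "lam > 0"
    and Gf: "\<forall>x. Gt n b f x \<le> N" and Gg: "\<forall>x. Gt n b g x \<le> N"
  shows "Ss n b l g - Ss n b l f \<le> lam * ((Pp n b l N g + 2*N*Mm n b l g) - (Pp n b l N f + 2*N*Mm n b l f))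
           + (if br n b l f g then 1/(2*lam) else 0)"
proof -
  obtain k' q U D where h0: "k' \<ge> 0" "q \<ge> 1" "U \<subseteq> {..<n}" "D \<subseteq> {..<n}" "U \<inter> D = {}"
    "card U = q" "card D = q" and h: "\<forall>i\<in>U\<union>D. f i = k'" "\<forall>i\<in>U. g i = k' + 1"
    "\<forall>i\<in>D. g i = (if int l dvd k' then k' else k' - 1)" "\<forall>i. i \<notin> U \<union> D \<longrightarrow> g i = f i"
    by (rule step_elim[OF st])
  define d where "d = (if int l dvd k' then k' else k' - 1)"
  have hD: "\<forall>i\<in>D. g i = d" using h(3) d_def by simp
  have gen: "\<And>\<phi>. (\<Sum>i<n. \<phi> (g i)) = (\<Sum>i<n. \<phi> (f i)) + real q * (\<phi> (k'+1) - \<phi> k') + real q * (\<phi> d - \<phi> k')"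
    using step_sum[OF h0(3,4,5) h(1,2) hD h(4)] h0(6,7) by simp
  define Y where "Y = (\<lambda>v. real_of_int (clampv b l v * (clampv b l v - 1)))"
  define C where "C = (\<lambda>v. real_of_int (clampv b l v))"
  define I where "I = (\<lambda>(x::nat) v. if v > b + int x then 1 else (0::real))"
  define F where "F = (\<lambda>z::real. z * (N - z))"
  have SsY: "\<And>f. Ss n b l f = (\<Sum>i<n. Y (f i))" by (simp add: Ss_def Y_def)
  have MmC: "\<And>f. Mm n b l f = (\<Sum>i<n. C (f i))" by (simp add: Mm_def C_def)
  have GtI: "\<And>f x. Gt n b f x = (\<Sum>i<n. I x (f i))" by (simp add: Gt_def cnt_def I_def)
  have PpF: "\<And>f. Pp n b l N f = (\<Sum>x<l. F (Gt n b f x))" by (simp add: Pp_def F_def)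
  have SsE: "Ss n b l g = Ss n b l f + real q * (Y (k'+1) - Y k') + real q * (Y d - Y k')"
    unfolding SsY by (rule gen)
  have MmE: "Mm n b l g = Mm n b l f + real q * (C (k'+1) - C k') + real q * (C d - C k')"
    unfolding MmC by (rule gen)
  have GtE: "\<And>x. Gt n b g x = Gt n b f x + real q * (I x (k'+1) - I x k') + real q * (I x d - I x k')"
    unfolding GtI by (rule gen)
  have brpos: "0 \<le> (if br n b l f g then 1/(2*lam) else 0)" using lam by simp
  have dle: "d \<le> k'" unfolding d_def by simp
  have "U \<noteq> {}" using h0(2,6) by auto
  then obtain u where u: "u \<in> U" by blast
  have un: "u < n" using u h0(3) by auto
  have fu: "f u = k'" using u h(1) by auto
  have gu: "g u = k' + 1" using u h(2) by auto
  have fUD: "finite U" "finite D" using finite_subset[OF h0(3)] finite_subset[OF h0(4)] by auto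
  have cardUD: "card (U \<union> D) = 2 * q" using card_Un_disjoint[OF fUD h0(5)] h0(6,7) by simp
  show ?thesis
  proof (cases "k' < b \<or> k' \<ge> b + int l")
    case True
    have dge: "k' \<ge> b + int l \<Longrightarrow> d \<ge> b + int l"
    proof -
      assume kb: "k' \<ge> b + int l"
      show "d \<ge> b + int l"
      proof (cases "int l dvd k'")
        case True then show ?thesis using kb d_def by simp
      next
        case False
        have "int l dvd b + int l" using ldb by simp
        then have "k' \<noteq> b + int l" using False by auto
        then show ?thesis using kb d_def False by simp
      qed
    qed
    have cY: "Y (k'+1) = Y k'" "Y d = Y k'" "C (k'+1) = C k'" "C d = C k'"
      using True dge dle by (auto simp: Y_def C_def clampv_low clampv_high)
    have cI: "\<And>x. x < l \<Longrightarrow> I x (k'+1) = I x k' \<and> I x d = I x k'"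
      using True dge dle by (auto simp: I_def)
    have "Ss n b l g = Ss n b l f" using SsE cY by simp
    moreover have "Mm n b l g = Mm n b l f" using MmE cY by simp
    moreover have "Pp n b l N g = Pp n b l N f"
      unfolding PpF by (rule sum.cong) (use GtE cI in auto)
    ultimately show ?thesis using brpos by simp
  next
    case False
    then have kb1: "b \<le> k'" and kb2: "k' < b + int l" by auto
    define j where "j = k' - b"
    have j0: "0 \<le> j" and jl: "j < int l" using kb1 kb2 j_def by auto
    have dvdj: "int l dvd k' \<longleftrightarrow> j = 0"
    proof
      assume "int l dvd k'"
      then have "int l dvd j" using ldb j_def by (simp add: dvd_diff)
      then show "j = 0" using j0 jl zdvd_imp_le by fastforce
    next
      assume "j = 0" then show "int l dvd k'" using ldb j_def by simp
    qed
    have brT: "br n b l f g" unfolding br_def using un fu gu kb1 kb2 by (intro exI[of _ u]) auto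
    show ?thesis
    proof (cases "j = 0")
      case True
      have dk: "d = k'" using True dvdj d_def by simp
      have kb: "k' = b" using True j_def by simp
      have cY: "Y (k'+1) = Y k'" "C (k'+1) = C k' + 1"
        using kb l2 by (auto simp: Y_def C_def clampv_def)
      have Ss_eq: "Ss n b l g = Ss n b l f" using SsE cY dk by simp
      have Mm_eq: "Mm n b l g = Mm n b l f + real q" using MmE cY dk by simp
      have Gt_eq: "\<And>x. Gt n b g x = Gt n b f x + (if x = 0 then real q else 0)"
        using GtE dk kb by (auto simp: I_def)
      define G0 where "G0 = Gt n b f 0"
      have "Pp n b l N g = (\<Sum>x<l. F (Gt n b f x) + (if x = 0 then F (G0 + real q) - F G0 else 0))"
        unfolding PpF by (rule sum.cong) (auto simp: Gt_eq G0_def)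
      also have "\<dots> = Pp n b l N f + (F (G0 + real q) - F G0)"
        unfolding PpF using l2 by (simp add: sum.distrib)
      finally have Pp_eq: "Pp n b l N g = Pp n b l N f + (F (G0 + real q) - F G0)" .
      have G0n1: "0 \<le> G0" unfolding G0_def Gt_def by (rule cnt_nonneg)
      have G0n2: "G0 \<le> N" using Gf unfolding G0_def by blast
      have G0n3: "G0 + real q \<le> N" using spec[OF Gg, of 0] Gt_eq[of 0] unfolding G0_def by simp
      note G0n = G0n1 G0n2 G0n3
      have q0: "real q \<ge> 0" by simp
      have "0 \<le> real q * (3 * N - 2 * G0 - real q)" using G0n q0 by (intro mult_nonneg_nonneg) auto
      also have "real q * (3 * N - 2 * G0 - real q) = (F (G0 + real q) - F G0) + 2 * N * real q"
        unfolding F_def by (simp add: algebra_simps)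
      finally have nn: "0 \<le> (F (G0 + real q) - F G0) + 2 * N * real q" .
      have "0 \<le> lam * ((F (G0 + real q) - F G0) + 2 * N * real q)" using nn lam by simp
      moreover have "lam * ((Pp n b l N g + 2*N*Mm n b l g) - (Pp n b l N f + 2*N*Mm n b l f))
          = lam * ((F (G0 + real q) - F G0) + 2 * N * real q)"
        unfolding Pp_eq Mm_eq by (simp add: algebra_simps)
      ultimately show ?thesis using Ss_eq brpos by linarith
    next
      case False
      have dk: "d = k' - 1" using False dvdj d_def by simp
      define jn where "jn = nat j"
      have jn: "int jn = j" "1 \<le> jn" "jn < l" using j0 jl False jn_def by auto
      have cY: "Y (k'+1) - Y k' = 2 * j" "Y d - Y k' = - 2 * j + 2" "C (k'+1) - C k' = 1" "C d - C k' = -1"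
        using dk j_def j0 jl False
        by (auto simp: Y_def C_def clampv_mid algebra_simps)
      have Ss_eq: "Ss n b l g = Ss n b l f + 2 * real q" using SsE cY by (simp add: algebra_simps)
      have Mm_eq: "Mm n b l g = Mm n b l f" using MmE cY by simp
      have Gt_eq: "\<And>x. Gt n b g x = Gt n b f x + (if x = jn then real q else 0) - (if x = jn - 1 then real q else 0)"
      proof -
        fix x
        have a1: "I x (k'+1) - I x k' = (if x = jn then 1 else 0)"
          using jn j_def by (auto simp: I_def)
        have a2: "I x d - I x k' = - (if x = jn - 1 then 1 else 0)"
          using jn j_def dk by (auto simp: I_def)
        show "Gt n b g x = Gt n b f x + (if x = jn then real q else 0) - (if x = jn - 1 then real q else 0)"
          using GtE[of x] a1 a2 by simp
      qed
      define Gj where "Gj = Gt n b f jn"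
      define Gj1 where "Gj1 = Gt n b f (jn - 1)"
      have neq: "jn \<noteq> jn - 1" using jn by simp
      have "Pp n b l N g = (\<Sum>x<l. F (Gt n b f x) + (if x = jn then F (Gj + real q) - F Gj else 0)
              + (if x = jn - 1 then F (Gj1 - real q) - F Gj1 else 0))"
        unfolding PpF by (rule sum.cong) (use neq in \<open>auto simp: Gt_eq Gj_def Gj1_def\<close>)
      also have "\<dots> = Pp n b l N f + (F (Gj + real q) - F Gj) + (F (Gj1 - real q) - F Gj1)"
        unfolding PpF using jn by (simp add: sum.distrib less_imp_diff_less)
      finally have Pp_eq: "Pp n b l N g = Pp n b l N f + (F (Gj + real q) - F Gj) + (F (Gj1 - real q) - F Gj1)" .
      have cge: "Gj1 \<ge> Gj + 2 * real q"
      proof -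
        have "Gj1 = cnt n f (\<lambda>v. v > b + int (jn - 1) \<and> v > b + int jn) + cnt n f (\<lambda>v. v > b + int (jn - 1) \<and> \<not> v > b + int jn)"
          unfolding Gj1_def Gt_def by (rule cnt_split)
        moreover have "Gj \<le> cnt n f (\<lambda>v. v > b + int (jn - 1) \<and> v > b + int jn)"
          unfolding Gj_def Gt_def by (rule cnt_mono) (use jn in auto)
        moreover have "real (card (U \<union> D)) \<le> cnt n f (\<lambda>v. v > b + int (jn - 1) \<and> \<not> v > b + int jn)"
          by (rule cnt_ge_card) (use h0(3,4) h(1) jn j_def in auto)
        ultimately show ?thesis using cardUD by simp
      qed
      have sumAB: "(F (Gj + real q) - F Gj) + (F (Gj1 - real q) - F Gj1) = 2 * real q * (Gj1 - Gj) - 2 * (real q)^2"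
        unfolding F_def by (simp add: algebra_simps power2_eq_square)
      have "2 * (real q)^2 \<le> 2 * real q * (Gj1 - Gj) - 2 * (real q)^2"
      proof -
        have "2 * real q * (2 * real q) \<le> 2 * real q * (Gj1 - Gj)"
          using cge by (intro mult_left_mono) auto
        then show ?thesis by (simp add: power2_eq_square)
      qed
      then have "lam * (2 * (real q)^2) \<le> lam * ((F (Gj + real q) - F Gj) + (F (Gj1 - real q) - F Gj1))"
        using lam sumAB by (intro mult_left_mono) auto
      moreover have "2 * real q \<le> lam * (2 * (real q)^2) + 1 / (2 * lam)" by (rule amgm_aux[OF lam])
      moreover have "lam * ((Pp n b l N g + 2*N*Mm n b l g) - (Pp n b l N f + 2*N*Mm n b l f))
          = lam * ((F (Gj + real q) - F Gj) + (F (Gj1 - real q) - F Gj1))"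
        unfolding Pp_eq Mm_eq by (simp add: algebra_simps)
      moreover have "(if br n b l f g then 1/(2*lam) else 0) = 1/(2*lam)" using brT by simp
      ultimately show ?thesis using Ss_eq by linarith
    qed
  qed
qed

lemma Gt_bound:
  assumes pl: "cup_play l n T s" and ldb: "int l dvd b" and t: "t \<le> T" and b0: "b \<ge> 0"
  shows "Gt n b (s t) x \<le> cnt n (s T) (\<lambda>v. v \<ge> b)"
  unfolding Gt_def cnt_def
proof (rule sum_mono)
  fix i assume "i \<in> {..<n}"
  show "(if b + int x < s t i then 1 else 0) \<le> (if b \<le> s T i then 1 else (0::real))"
  proof (cases "b + int x < s t i")
    case True
    then have "s t i \<ge> b" by simp
    then have "s T i \<ge> b" using play_mono[OF pl t le_refl ldb] by blast
    then show ?thesis by simp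
  qed simp
qed

lemma band_play:
  fixes s :: "nat \<Rightarrow> nat \<Rightarrow> int" and lam :: real
  assumes pl: "cup_play l n T s" and l2: "l \<ge> 2" and ldb: "int l dvd b" and b0: "b \<ge> 0" and lam: "lam > 0"
  shows "t \<le> T \<Longrightarrow> Ss n b l (s t) \<le> lam * (Pp n b l (cnt n (s T) (\<lambda>v. v \<ge> b)) (s t)
            + 2 * cnt n (s T) (\<lambda>v. v \<ge> b) * Mm n b l (s t))
          + (\<Sum>t'<t. if br n b l (s t') (s (Suc t')) then 1 else 0) / (2*lam)"
proof (induction t)
  case 0
  have s0: "s 0 = (\<lambda>_. 0)" using pl unfolding cup_play_def by simp
  have c0: "clampv b l 0 = 0" using b0 by (simp add: clampv_low)
  have "Ss n b l (s 0) = 0" unfolding Ss_def s0 c0 by simp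
  moreover have "Mm n b l (s 0) = 0" unfolding Mm_def s0 c0 by simp
  moreover have "Pp n b l N (s 0) = 0" for N
  proof -
    have "\<And>x. Gt n b (s 0) x = 0" unfolding Gt_def cnt_def s0 using b0 by simp
    then show ?thesis unfolding Pp_def by simp
  qed
  ultimately show ?case by simp
next
  case (Suc m)
  define N where "N = cnt n (s T) (\<lambda>v. v \<ge> b)"
  define A where "A = (\<lambda>t. Pp n b l N (s t) + 2 * N * Mm n b l (s t))"
  define B where "B = (\<lambda>t. (\<Sum>t'<t. if br n b l (s t') (s (Suc t')) then 1 else (0::real)))"
  have IH: "Ss n b l (s m) \<le> lam * A m + B m / (2*lam)"
    using Suc unfolding A_def B_def N_def by simp
  have st: "Ss n b l (s (Suc m)) - Ss n b l (s m) \<le> lam * (A (Suc m) - A m)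
           + (if br n b l (s m) (s (Suc m)) then 1/(2*lam) else 0)"
    unfolding A_def
    by (rule band_step[OF play_step[OF pl] l2 ldb lam]) (use Suc.prems Gt_bound[OF pl ldb _ b0] in \<open>auto simp: N_def\<close>)
  have Bs: "B (Suc m) / (2*lam) = B m / (2*lam) + (if br n b l (s m) (s (Suc m)) then 1/(2*lam) else 0)"
    unfolding B_def by (simp add: add_divide_distrib)
  have "lam * (A (Suc m) - A m) = lam * A (Suc m) - lam * A m" by (simp add: right_diff_distrib)
  then have "Ss n b l (s (Suc m)) \<le> lam * A (Suc m) + B (Suc m) / (2*lam)"
    using IH st Bs by linarith
  then show ?case unfolding A_def B_def N_def by simp
qed

lemma int_prod_nonneg: "(c::int) \<ge> 0 \<Longrightarrow> c * (c - 1) \<ge> 0"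
  by (cases "c = 0") (auto intro: mult_nonneg_nonneg)

lemma band_final:
  fixes s :: "nat \<Rightarrow> nat \<Rightarrow> int"
  assumes pl: "cup_play l n T s" and l2: "l \<ge> 2" and ldb: "int l dvd b" and b0: "b \<ge> 0"
    and Epos: "cnt n (s T) (\<lambda>v. v \<ge> b + int l) > 0"
  shows "(cnt n (s T) (\<lambda>v. v \<ge> b + int l))^2 * real l * (real l - 1)^2
         \<le> 6 * (\<Sum>t<T. if br n b l (s t) (s (Suc t)) then 1 else 0) * (cnt n (s T) (\<lambda>v. v \<ge> b))^2"
proof -
  define N where "N = cnt n (s T) (\<lambda>v. v \<ge> b)"
  define E where "E = cnt n (s T) (\<lambda>v. v \<ge> b + int l)"
  define Ta where "Ta = (\<Sum>t<T. if br n b l (s t) (s (Suc t)) then 1 else (0::real))"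
  have E0: "E > 0" using Epos E_def by simp
  have NE: "E \<le> N" unfolding E_def N_def by (rule cnt_mono) simp
  have N0: "N > 0" using E0 NE by simp
  have Ta0: "Ta \<ge> 0" unfolding Ta_def by (rule sum_nonneg) simp
  have SsT: "E * (real l * (real l - 1)) \<le> Ss n b l (s T)"
  proof -
    have "E * (real l * (real l - 1)) = (\<Sum>i<n. (if b + int l \<le> s T i then 1 else 0) * (real l * (real l - 1)))"
      unfolding E_def cnt_def by (simp add: sum_distrib_right)
    also have "\<dots> \<le> Ss n b l (s T)" unfolding Ss_def
    proof (rule sum_mono)
      fix i assume "i \<in> {..<n}"
      show "(if b + int l \<le> s T i then 1 else 0) * (real l * (real l - 1))
            \<le> real_of_int (clampv b l (s T i) * (clampv b l (s T i) - 1))"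
      proof (cases "b + int l \<le> s T i")
        case True then show ?thesis by (simp add: clampv_high)
      next
        case False
        have "clampv b l (s T i) \<ge> 0" unfolding clampv_def by simp
        then have "clampv b l (s T i) * (clampv b l (s T i) - 1) \<ge> 0" by (rule int_prod_nonneg)
        then have "real_of_int (clampv b l (s T i) * (clampv b l (s T i) - 1)) \<ge> 0" by (rule of_int_nonneg)
        moreover have "(if b + int l \<le> s T i then 1 else 0) * (real l * (real l - 1)) = 0" using False by simp
        ultimately show ?thesis by linarith
      qed
    qed
    finally show ?thesis .
  qed
  have PpT: "Pp n b l N (s T) \<le> real l * N^2"
  proof -
    have "Pp n b l N (s T) \<le> real (card {..<l}) * N^2" unfolding Pp_def
    proof (rule sum_bounded_above)
      fix x assume "x \<in> {..<l}"
      have g0: "0 \<le> Gt n b (s T) x" unfolding Gt_def by (rule cnt_nonneg)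
      have g1: "Gt n b (s T) x \<le> N" using Gt_bound[OF pl ldb le_refl b0] N_def by simp
      have "Gt n b (s T) x * (N - Gt n b (s T) x) \<le> N * N"
        using g0 g1 by (intro mult_mono) auto
      then show "Gt n b (s T) x * (N - Gt n b (s T) x) \<le> N^2" by (simp add: power2_eq_square)
    qed
    then show ?thesis by simp
  qed
  have MmT: "Mm n b l (s T) \<le> real l * N"
  proof -
    have "Mm n b l (s T) \<le> (\<Sum>i<n. real l * (if b \<le> s T i then 1 else 0))" unfolding Mm_def
    proof (rule sum_mono)
      fix i assume "i \<in> {..<n}"
      show "real_of_int (clampv b l (s T i)) \<le> real l * (if b \<le> s T i then 1 else 0)"
        by (cases "b \<le> s T i") (auto simp: clampv_def)
    qed
    also have "\<dots> = real l * N" unfolding N_def cnt_def by (simp add: sum_distrib_left)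
    finally show ?thesis .
  qed
  have key: "\<And>lam. lam > 0 \<Longrightarrow> E * (real l * (real l - 1)) \<le> lam * (3 * real l * N^2) + Ta / (2 * lam)"
  proof -
    fix lam :: real assume lam: "lam > 0"
    have "Ss n b l (s T) \<le> lam * (Pp n b l N (s T) + 2 * N * Mm n b l (s T)) + Ta / (2*lam)"
      using band_play[OF pl l2 ldb b0 lam le_refl] unfolding N_def Ta_def by simp
    moreover have "Pp n b l N (s T) + 2 * N * Mm n b l (s T) \<le> 3 * real l * N^2"
    proof -
      have "2 * N * Mm n b l (s T) \<le> 2 * N * (real l * N)" using MmT N0 by (intro mult_left_mono) auto
      then show ?thesis using PpT by (simp add: power2_eq_square algebra_simps)
    qed
    then have "lam * (Pp n b l N (s T) + 2 * N * Mm n b l (s T)) \<le> lam * (3 * real l * N^2)"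
      using lam by (intro mult_left_mono) auto
    ultimately show "E * (real l * (real l - 1)) \<le> lam * (3 * real l * N^2) + Ta / (2 * lam)"
      using SsT by linarith
  qed
  define L1 where "L1 = real l - 1"
  have L1p: "L1 > 0" using l2 L1_def by simp
  define lam where "lam = E * L1 / (6 * N^2)"
  have lamp: "lam > 0" using E0 L1p N0 lam_def by simp
  have k1: "E * (real l * L1) \<le> lam * (3 * real l * N^2) + Ta / (2 * lam)"
    using key[OF lamp] L1_def by simp
  have e1: "lam * (3 * real l * N^2) = E * (real l * L1) / 2"
    unfolding lam_def using N0 by (simp add: field_simps power2_eq_square)
  have e2: "Ta / (2 * lam) = 3 * Ta * N^2 / (E * L1)"
    unfolding lam_def using N0 E0 L1p by (simp add: field_simps power2_eq_square)
  have "E * (real l * L1) / 2 \<le> 3 * Ta * N^2 / (E * L1)" using k1 e1 e2 by linarith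
  then have "E * (real l * L1) / 2 * (E * L1) \<le> 3 * Ta * N^2"
    using E0 L1p by (simp add: pos_le_divide_eq)
  then have "E^2 * real l * L1^2 \<le> 6 * Ta * N^2" by (simp add: power2_eq_square algebra_simps)
  then show ?thesis unfolding E_def Ta_def N_def L1_def by simp
qed

lemma br_unique:
  fixes f g :: "nat \<Rightarrow> int"
  assumes st: "cup_step l n f g" and l1: "l \<ge> 1"
    and b1: "br n (int (a*l)) l f g" and b2: "br n (int (a'*l)) l f g"
  shows "a = a'"
proof -
  obtain k' where k: "\<forall>i. g i \<noteq> f i \<longrightarrow> f i = k'" using step_changed[OF st] by blast
  from b1 obtain i where i: "g i \<noteq> f i" "int (a*l) \<le> f i" "f i < int (a*l) + int l" unfolding br_def by blast
  from b2 obtain i' where i': "g i' \<noteq> f i'" "int (a'*l) \<le> f i'" "f i' < int (a'*l) + int l" unfolding br_def by blast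
  have "f i = k'" "f i' = k'" using k i(1) i'(1) by auto
  then have "int (a*l) < int (a'*l) + int l" "int (a'*l) < int (a*l) + int l" using i i' by auto
  then have "int (a*l) < int (Suc a' * l)" "int (a'*l) < int (Suc a * l)" by (simp_all add: algebra_simps)
  then have "a*l < Suc a' * l" "a'*l < Suc a * l" using of_nat_less_imp_less by blast+
  then have "a < Suc a'" "a' < Suc a" using mult_less_cancel2 by blast+
  then show ?thesis by simp
qed

lemma sum_br_le:
  assumes pl: "cup_play l n T s" and l1: "l \<ge> 1"
  shows "(\<Sum>a<m. \<Sum>t<T. if br n (int (a*l)) l (s t) (s (Suc t)) then 1 else 0) \<le> real T"
proof -
  have "(\<Sum>a<m. \<Sum>t<T. if br n (int (a*l)) l (s t) (s (Suc t)) then 1 else (0::real))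
      = (\<Sum>t<T. \<Sum>a<m. if br n (int (a*l)) l (s t) (s (Suc t)) then 1 else (0::real))"
    by (rule sum.swap)
  also have "\<dots> \<le> (\<Sum>t<T. 1)"
  proof (rule sum_mono)
    fix t assume t: "t \<in> {..<T}"
    have st: "cup_step l n (s t) (s (Suc t))" using play_step[OF pl] t by simp
    have "(\<Sum>a<m. if br n (int (a*l)) l (s t) (s (Suc t)) then 1 else (0::real))
        = (\<Sum>a\<in>{a\<in>{..<m}. br n (int (a*l)) l (s t) (s (Suc t))}. 1)"
      by (subst sum.inter_filter[symmetric]) auto
    also have "\<dots> = real (card {a\<in>{..<m}. br n (int (a*l)) l (s t) (s (Suc t))})" by simp
    also have "\<dots> \<le> 1"
    proof -
      have "card {a\<in>{..<m}. br n (int (a*l)) l (s t) (s (Suc t))} \<le> Suc 0"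
        using br_unique[OF st l1] by (subst card_le_Suc0_iff_eq) auto
      then show ?thesis by simp
    qed
    finally show "(\<Sum>a<m. if br n (int (a*l)) l (s t) (s (Suc t)) then 1 else (0::real)) \<le> 1" .
  qed
  also have "\<dots> = real T" by simp
  finally show ?thesis .
qed

lemma cnt_cong: "(\<And>v. P v \<longleftrightarrow> Q v) \<Longrightarrow> cnt n f P = cnt n f Q"
proof -
  assume "\<And>v. P v \<longleftrightarrow> Q v"
  then have "P = Q" by blast
  then show ?thesis by simp
qed

lemma E_split:
  "cnt n f (\<lambda>v. v \<ge> int (a*l)) = cnt n f (\<lambda>v. v \<ge> int (Suc a * l))
     + cnt n f (\<lambda>v. int (a*l) \<le> v \<and> v < int (a*l) + int l)"
proof -
  have "cnt n f (\<lambda>v. v \<ge> int (a*l)) = cnt n f (\<lambda>v. v \<ge> int (a*l) \<and> v \<ge> int (a*l) + int l)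
     + cnt n f (\<lambda>v. v \<ge> int (a*l) \<and> \<not> v \<ge> int (a*l) + int l)" by (rule cnt_split)
  moreover have "cnt n f (\<lambda>v. v \<ge> int (a*l) \<and> v \<ge> int (a*l) + int l) = cnt n f (\<lambda>v. v \<ge> int (Suc a * l))"
    by (rule cnt_cong) auto
  moreover have "cnt n f (\<lambda>v. v \<ge> int (a*l) \<and> \<not> v \<ge> int (a*l) + int l) = cnt n f (\<lambda>v. int (a*l) \<le> v \<and> v < int (a*l) + int l)"
    by (rule cnt_cong) auto
  ultimately show ?thesis by simp
qed

lemma stair_total:
  assumes pl: "cup_play l n T s" and l1: "l \<ge> 1" and top: "\<exists>i<n. s T i \<ge> int (4*h*l)"
  shows "m \<le> 2*h \<Longrightarrow> cnt n (s T) (\<lambda>v. v \<ge> int ((4*h - m)*l)) \<ge> real (m * l)"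
proof (induction m)
  case 0 then show ?case using cnt_nonneg by simp
next
  case (Suc m)
  define a where "a = 4*h - Suc m"
  have aS: "Suc a = 4*h - m" using Suc.prems a_def by simp
  have IH: "cnt n (s T) (\<lambda>v. v \<ge> int (Suc a * l)) \<ge> real (m * l)" using Suc aS by simp
  have st: "stair n (int (a*l)) l (s T)" by (rule stair_play[OF pl le_refl]) (use l1 in auto)
  have le: "Suc a * l \<le> 4*h*l" using aS by simp
  have "\<exists>i<n. s T i \<ge> int (a*l) + int l"
  proof -
    from top obtain i where "i < n" "s T i \<ge> int (4*h*l)" by blast
    moreover have "int (a*l) + int l = int (Suc a * l)" by simp
    ultimately show ?thesis using le by (intro exI[of _ i]) (auto simp del: of_nat_mult)
  qed
  then have "real l \<le> cnt n (s T) (\<lambda>v. int (a*l) \<le> v \<and> v < int (a*l) + int l)"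
    using st l1 unfolding stair_def by blast
  then have "cnt n (s T) (\<lambda>v. v \<ge> int (a*l)) \<ge> real (m*l) + real l" using E_split[of n "s T" a l] IH by simp
  then show ?case using a_def by (simp add: algebra_simps)
qed

theorem theorem6p6:
  fixes \<alpha> \<beta> :: real
  assumes "0 < \<alpha>" and "\<alpha> \<le> \<beta>"
  shows "\<exists>c::real > 0. \<forall>(k::nat) (n::nat) (h::nat) (T::nat) s.
           0 < k \<longrightarrow> k \<le> n \<longrightarrow>
           \<alpha> * ln (real n / real k + 1) \<le> real h \<longrightarrow>
           real h \<le> \<beta> * ln (real n / real k + 1) \<longrightarrow>
           2 \<le> h \<longrightarrow> h \<le> k \<longrightarrow>
           cup_play (k div h) n T s \<longrightarrow>
           (\<exists>i < n. s T i \<ge> 4 * int k) \<longrightarrow>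
           real T \<ge> c * real h * real (k div h) ^ 3"
proof -
  have alpha: "0 < \<alpha>" by (rule assms(1))
  define c0 where "c0 = exp (-1/\<alpha>)"
  have c0p: "c0 > 0" unfolding c0_def by simp
  have c01: "c0 \<le> 1" unfolding c0_def using alpha by simp
  show ?thesis
  proof (intro exI[of _ "c0/12"] conjI allI impI)
    show "c0/12 > 0" using c0p by simp
    fix k n h T :: nat and s :: "nat \<Rightarrow> nat \<Rightarrow> int"
    assume k0: "0 < k" and kn: "k \<le> n" and ha: "\<alpha> * ln (real n / real k + 1) \<le> real h"
      and hb: "real h \<le> \<beta> * ln (real n / real k + 1)" and h2: "2 \<le> h" and hk: "h \<le> k"
      and pl: "cup_play (k div h) n T s" and top: "\<exists>i < n. s T i \<ge> 4 * int k"
    define l where "l = k div h"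
    have pl': "cup_play l n T s" using pl l_def by simp
    have h0: "h > 0" using h2 by simp
    have l1: "l \<ge> 1"
    proof -
      have "h div h \<le> k div h" using hk by (rule div_le_mono)
      then show ?thesis using h0 l_def by simp
    qed
    have kdec: "k = l * h + k mod h" using l_def by simp
    have kmod: "k mod h < h" using h0 by simp
    have hl: "h * l \<le> k" using kdec by (simp add: mult.commute)
    have k2: "k \<le> 2*h*l"
    proof -
      have "k < l * h + h" using kdec kmod by linarith
      also have "\<dots> \<le> 2*h*l" using l1 by (simp add: algebra_simps)
      finally show ?thesis by simp
    qed
    obtain i0 where i0: "i0 < n" "s T i0 \<ge> 4 * int k" using top by blast
    have T4: "4 * k \<le> T"
    proof -
      have "s T i0 \<le> int T" using play_le[OF pl' le_refl] by blast
      then show ?thesis using i0 by simp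
    qed
    show "real T \<ge> c0/12 * real h * real (k div h) ^ 3"
    proof (cases "l = 1")
      case True
      have "c0/12 * real h * real (k div h) ^ 3 = c0/12 * real h" using True l_def by simp
      also have "\<dots> \<le> real h" proof -
        have "c0 * real h \<le> 1 * real h" using c01 by (intro mult_right_mono) auto
        then show ?thesis by simp
      qed
      also have "\<dots> \<le> real T" using hk T4 by simp
      finally show ?thesis .
    next
      case False
      then have l2: "l \<ge> 2" using l1 by simp
      define E where "E = (\<lambda>a. cnt n (s T) (\<lambda>v. v \<ge> int (a*l)))"
      define Ta where "Ta = (\<lambda>a. (\<Sum>t<T. if br n (int (a*l)) l (s t) (s (Suc t)) then 1 else (0::real)))"
      have top': "\<exists>i<n. s T i \<ge> int (4*h*l)"
      proof -
        have "4*h*l \<le> 4*k" using hl by simp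
        then have "int (4*h*l) \<le> int (4*k)" by (simp only: of_nat_le_iff)
        then have "int (4*h*l) \<le> 4 * int k" by simp
        then show ?thesis using i0 by (intro exI[of _ i0]) auto
      qed
      have E2h: "E (2*h) \<ge> real k"
      proof -
        have "cnt n (s T) (\<lambda>v. v \<ge> int ((4*h - 2*h)*l)) \<ge> real (2*h * l)"
          by (rule stair_total[OF pl' l1 top']) simp
        moreover have "4*h - 2*h = 2*h" by simp
        moreover have "real k \<le> real (2*h*l)" using k2 by (simp only: of_nat_le_iff)
        ultimately show ?thesis unfolding E_def by simp
      qed
      have Emono: "\<And>a a'. a \<le> a' \<Longrightarrow> E a' \<le> E a"
      proof -
        fix a a' :: nat assume "a \<le> a'"
        then have "a*l \<le> a'*l" by (rule mult_le_mono1)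
        then have "int (a*l) \<le> int (a'*l)" by (simp only: of_nat_le_iff)
        then show "E a' \<le> E a" unfolding E_def
          by (intro cnt_mono) (erule order_trans)
      qed
      have Epos: "\<And>a. a \<le> 2*h \<Longrightarrow> E a > 0"
      proof -
        fix a :: nat assume "a \<le> 2*h"
        then have "E (2*h) \<le> E a" by (rule Emono)
        then show "E a > 0" using E2h k0 by simp
      qed
      have E0: "E 0 = real n"
      proof -
        have "E 0 = (\<Sum>i<n. (1::real))" unfolding E_def cnt_def
          by (rule sum.cong) (use play_nonneg[OF pl' le_refl] in auto)
        then show ?thesis by simp
      qed
      have bandT: "\<And>a. a < 2*h \<Longrightarrow> (E (Suc a) / E a)^2 * (real l * (real l - 1)^2) \<le> 6 * Ta a"
      proof -
        fix a assume a: "a < 2*h"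
        have ldb: "int l dvd int (a*l)" by simp
        have Es: "cnt n (s T) (\<lambda>v. v \<ge> int (a*l) + int l) = E (Suc a)"
          unfolding E_def by (rule cnt_cong) (simp add: algebra_simps)
        have EaP: "E a > 0" "E (Suc a) > 0" using Epos a by auto
        have "(cnt n (s T) (\<lambda>v. v \<ge> int (a*l) + int l))^2 * real l * (real l - 1)^2
           \<le> 6 * Ta a * (cnt n (s T) (\<lambda>v. v \<ge> int (a*l)))^2"
          unfolding Ta_def by (rule band_final[OF pl' l2 ldb]) (use Es EaP in auto)
        then have "E (Suc a)^2 * (real l * (real l - 1)^2) \<le> 6 * Ta a * E a ^2"
          using Es unfolding E_def by (simp add: algebra_simps)
        then show "(E (Suc a) / E a)^2 * (real l * (real l - 1)^2) \<le> 6 * Ta a"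
          using EaP by (simp add: power_divide field_simps)
      qed
      have sumTa: "(\<Sum>a<2*h. Ta a) \<le> real T"
        unfolding Ta_def by (rule sum_br_le[OF pl' l1])
      have each: "\<And>a. a < 2*h \<Longrightarrow> (E (Suc a) / E a)^2 \<ge> c0 * (1 + 1/\<alpha> + 2 * (ln (E (Suc a)) - ln (E a)))"
      proof -
        fix a assume a: "a < 2*h"
        have EaP: "E a > 0" "E (Suc a) > 0" using Epos a by auto
        define r where "r = E (Suc a) / E a"
        have rp: "r > 0" using EaP r_def by simp
        have lnr: "ln r = ln (E (Suc a)) - ln (E a)" using EaP r_def by (simp add: ln_div)
        have "ln (r^2 / c0) \<le> r^2 / c0 - 1" using rp c0p by (intro ln_le_minus_one) simp
        moreover have "ln (r^2 / c0) = 2 * ln r + 1/\<alpha>"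
          using rp c0p by (simp add: ln_div ln_realpow c0_def)
        ultimately have "1 + 1/\<alpha> + 2 * ln r \<le> r^2 / c0" by simp
        then have "c0 * (1 + 1/\<alpha> + 2 * ln r) \<le> r^2" using c0p by (simp add: pos_le_divide_eq mult.commute)
        then show "(E (Suc a) / E a)^2 \<ge> c0 * (1 + 1/\<alpha> + 2 * (ln (E (Suc a)) - ln (E a)))"
          using lnr r_def by simp
      qed
      have lnb: "ln (real n) - ln (real k) \<le> real h / \<alpha>"
      proof -
        have nk: "real n / real k > 0" using k0 kn by simp
        have "ln (real n / real k) \<le> ln (real n / real k + 1)" using nk by simp
        moreover have "ln (real n / real k) = ln (real n) - ln (real k)" using k0 kn by (simp add: ln_div)
        ultimately have "\<alpha> * (ln (real n) - ln (real k)) \<le> real h" using ha alpha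
          by (smt (verit) mult_left_mono)
        then show ?thesis using alpha by (simp add: pos_le_divide_eq mult.commute)
      qed
      have sumr: "(\<Sum>a<2*h. (E (Suc a) / E a)^2) \<ge> 2 * real h * c0"
      proof -
        have "(\<Sum>a<2*h. c0 * (1 + 1/\<alpha> + 2 * (ln (E (Suc a)) - ln (E a)))) \<le> (\<Sum>a<2*h. (E (Suc a) / E a)^2)"
          by (rule sum_mono) (use each in auto)
        moreover have "(\<Sum>a<2*h. c0 * (1 + 1/\<alpha> + 2 * (ln (E (Suc a)) - ln (E a))))
            = c0 * (2 * real h * (1 + 1/\<alpha>) + 2 * (ln (E (2*h)) - ln (E 0)))"
        proof -
          have "(\<Sum>a<2*h. c0 * (1 + 1/\<alpha> + 2 * (ln (E (Suc a)) - ln (E a))))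
              = c0 * (\<Sum>a<2*h. (1 + 1/\<alpha>) + 2 * (ln (E (Suc a)) - ln (E a)))"
            by (simp add: sum_distrib_left algebra_simps)
          also have "(\<Sum>a<2*h. (1 + 1/\<alpha>) + 2 * (ln (E (Suc a)) - ln (E a)))
              = 2 * real h * (1 + 1/\<alpha>) + 2 * (\<Sum>a<2*h. ln (E (Suc a)) - ln (E a))"
            by (simp add: sum.distrib sum_distrib_left)
          also have "(\<Sum>a<2*h. ln (E (Suc a)) - ln (E a)) = ln (E (2*h)) - ln (E 0)"
            by (rule sum_lessThan_telescope)
          finally show ?thesis by simp
        qed
        moreover have "ln (E (2*h)) \<ge> ln (real k)" using E2h k0 by simp
        moreover have "2 * real h * (1 + 1/\<alpha>) + 2 * (ln (real k) - ln (real n)) \<ge> 2 * real h"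
        proof -
          have "2 * real h * (1 + 1/\<alpha>) = 2 * real h + 2 * (real h / \<alpha>)" by (simp add: algebra_simps)
          moreover have "0 \<le> 2 * (real h / \<alpha>) + 2 * (ln (real k) - ln (real n))" using lnb by (smt (verit))
          ultimately show ?thesis by (smt (verit))
        qed
        ultimately have "c0 * (2 * real h) \<le> (\<Sum>a<2*h. (E (Suc a) / E a)^2)"
          using c0p E0 by (smt (verit) mult_left_mono)
        then show ?thesis by (simp add: algebra_simps)
      qed
      define W where "W = real l * (real l - 1)^2"
      have W0: "W \<ge> 0" using l2 W_def by simp
      have "(\<Sum>a<2*h. (E (Suc a) / E a)^2) * W \<le> (\<Sum>a<2*h. 6 * Ta a)"
        unfolding sum_distrib_right W_def by (rule sum_mono) (use bandT in auto)
      also have "\<dots> \<le> 6 * real T" using sumTa by (simp add: sum_distrib_left[symmetric])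
      finally have A: "(\<Sum>a<2*h. (E (Suc a) / E a)^2) * W \<le> 6 * real T" .
      have "2 * real h * c0 * W \<le> (\<Sum>a<2*h. (E (Suc a) / E a)^2) * W"
        using sumr W0 by (intro mult_right_mono) auto
      with A have B: "2 * real h * c0 * W \<le> 6 * real T" by linarith
      have lW: "real l ^ 3 \<le> 4 * W"
      proof -
        have "real l \<le> 2 * (real l - 1)" using l2 by simp
        then have "real l ^ 2 \<le> (2 * (real l - 1))^2" using l2 by (intro power_mono) auto
        moreover have "(2 * (real l - 1))^2 = 4 * (real l - 1)^2" by (simp add: power2_eq_square algebra_simps)
        ultimately have "real l ^ 2 \<le> 4 * (real l - 1)^2" by simp
        then have "real l * real l ^ 2 \<le> real l * (4 * (real l - 1)^2)"
          by (intro mult_left_mono) auto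
        then show ?thesis unfolding W_def by (simp add: power3_eq_cube power2_eq_square algebra_simps)
      qed
      have "c0/12 * real h * real (k div h) ^ 3 = (2 * real h * c0) * (real l ^ 3) / 24"
        using l_def by simp
      also have "\<dots> \<le> (2 * real h * c0) * (4 * W) / 24"
        using lW c0p by (intro divide_right_mono mult_left_mono) auto
      also have "\<dots> \<le> real T" using B by simp
      finally show ?thesis .
    qed
  qed
qed

end
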